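(* Let $\mathcal{B}$ be a real Banach space having a pre-dual space $\mathcal{B}_*$, let $\nu_j\in\mathcal{B}_*$, $j\in\mathbb{N}_m$, be linearly independent, and let $\mathbf{y}\in\mathbb{R}^m\setminus\{0\}$. For $\mathbf{c}\in\mathbb{R}^m$ put $\mathcal{L}^*(\mathbf{c}):=\sum_{j\in\mathbb{N}_m}c_j\nu_j$. Then $\hat{\mathbf{c}}\in\mathbb{R}^m\setminus\{0\}$ is a solution of $$\inf\{\|\mathcal{L}^*(\mathbf{c})\|_{\mathcal{B}_*}:\ \langle\mathbf{c},\mathbf{y}\rangle_{\mathbb{R}^m}=1,\ \mathbf{c}\in\mathbb{R}^m\}\qquad(\mathrm{D})$$ if and only if $$\frac{1}{\|\mathcal{L}^*(\hat{\mathbf{c}})\|_{\mathcal{B}_*}}\,\partial\|\cdot\|_{\mathcal{B}_*}(\mathcal{L}^*(\hat{\mathbf{c}}))\cap\mathcal{M}_{\mathbf{y}}\neq\emptyset.$$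
   Context: $\mathcal{B}$ is a real Banach space with dual $\mathcal{B}^*$ and pairing $\langle\nu,f\rangle_{\mathcal{B}}:=\nu(f)$; $\mathbb{N}_m:=\{1,\dots,m\}$; $\mathcal{L}(f):=[\langle\nu_j,f\rangle_{\mathcal{B}}:j\in\mathbb{N}_m]$, $\mathcal{M}_{\mathbf{y}}:=\{f\in\mathcal{B}:\mathcal{L}(f)=\mathbf{y}\}$. A normed space $\mathcal{B}_*$ is a pre-dual of $\mathcal{B}$ if $(\mathcal{B}_* )^*=\mathcal{B}$, with $\langle\nu,f\rangle_{\mathcal{B}}=f(\nu)$ for $\nu\in\mathcal{B}_*$. For a convex $\phi$ on a real normed space $X$, $\partial\phi(x):=\{\mu\in X^*:\phi(z)-\phi(x)\ge\mu(z-x)\ \forall z\in X\}$; so $\partial\|\cdot\|_{\mathcal{B}_*}(\nu)\subseteq\mathcal{B}$. *)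

theory Defs
  imports "HOL-Analysis.Analysis"
begin

text \<open>The pre-dual B_* is modelled by a real normed space of type 'p; the Banach space
  B = (B_*)^* is modelled (up to isometric isomorphism) by the bounded linear functionals
  'p \<Rightarrow>L real, with pairing f(nu).\<close>

definition Lstar :: "('m::finite \<Rightarrow> 'p::real_normed_vector) \<Rightarrow> real^'m \<Rightarrow> 'p" where
  "Lstar \<nu> c = (\<Sum>j\<in>UNIV. (c $ j) *\<^sub>R \<nu> j)"

definition subdiff :: "('a::real_normed_vector \<Rightarrow> real) \<Rightarrow> 'a \<Rightarrow> ('a \<Rightarrow>\<^sub>L real) set" where
  "subdiff \<phi> x = {\<mu>. \<forall>z. \<phi> z - \<phi> x \<ge> blinfun_apply \<mu> (z - x)}"

definition Mset :: "('m::finite \<Rightarrow> 'p::real_normed_vector) \<Rightarrow> real^'m \<Rightarrow> ('p \<Rightarrow>\<^sub>L real) set" where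
  "Mset \<nu> y = {f. \<forall>j. blinfun_apply f (\<nu> j) = y $ j}"

definition lin_indep_family :: "('m::finite \<Rightarrow> 'p::real_normed_vector) \<Rightarrow> bool" where
  "lin_indep_family \<nu> \<longleftrightarrow> (\<forall>c::'m \<Rightarrow> real. (\<Sum>j\<in>UNIV. c j *\<^sub>R \<nu> j) = 0 \<longrightarrow> (\<forall>j. c j = 0))"

definition dual_solution :: "('m::finite \<Rightarrow> 'p::real_normed_vector) \<Rightarrow> real^'m \<Rightarrow> real^'m \<Rightarrow> bool" where
  "dual_solution \<nu> y c \<longleftrightarrow> c \<bullet> y = 1 \<and>
     norm (Lstar \<nu> c) = Inf {norm (Lstar \<nu> d) | d. d \<bullet> y = 1}"

end

theory Submission
  imports Defs
begin


definition ext_ok :: "'p::real_normed_vector set \<Rightarrow> ('p \<Rightarrow> real) \<Rightarrow> real \<Rightarrow> ('p \<times> real) set \<Rightarrow> bool" where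
  "ext_ok S g K G \<longleftrightarrow> (\<exists>T h. G = (\<lambda>x. (x, h x)) ` T \<and> subspace T \<and> S \<subseteq> T \<and> (\<forall>x\<in>S. h x = g x)
     \<and> (\<forall>x\<in>T. \<forall>y\<in>T. h (x+y) = h x + h y) \<and> (\<forall>x\<in>T. \<forall>a. h (a *\<^sub>R x) = a * h x)
     \<and> (\<forall>x\<in>T. h x \<le> K * norm x))"

lemma fst_graph: "G = (\<lambda>x. (x, h x)) ` T \<Longrightarrow> fst ` G = T"
  by (simp add: image_image)

lemma chain_ok:
  fixes S :: "'p::real_normed_vector set"
  assumes C: "C \<in> chains (Collect (ext_ok S g K))" and ne: "C \<noteq> {}" and S0: "0 \<in> S"
  shows "ext_ok S g K (\<Union>C)"
proof -
  let ?U = "\<Union>C"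
  have CA: "\<And>G. G \<in> C \<Longrightarrow> ext_ok S g K G" using C by (auto simp: chains_def)
  have ch: "\<And>G1 G2. G1 \<in> C \<Longrightarrow> G2 \<in> C \<Longrightarrow> G1 \<subseteq> G2 \<or> G2 \<subseteq> G1"
    using C by (auto simp: chains_def chain_subset_def)
  have func: "\<And>x r s. (x,r) \<in> ?U \<Longrightarrow> (x,s) \<in> ?U \<Longrightarrow> r = s"
  proof -
    fix x r s assume "(x,r) \<in> ?U" "(x,s) \<in> ?U"
    then obtain G1 G2 where G: "G1 \<in> C" "G2 \<in> C" "(x,r) \<in> G1" "(x,s) \<in> G2" by auto
    have "\<exists>G\<in>C. (x,r) \<in> G \<and> (x,s) \<in> G" using ch[OF G(1,2)] G by blast
    then obtain G where "G \<in> C" "(x,r) \<in> G" "(x,s) \<in> G" by blast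
    moreover from CA[OF this(1)] obtain T h where "G = (\<lambda>x. (x, h x)) ` T" unfolding ext_ok_def by blast
    ultimately show "r = s" by auto
  qed
  define T where "T = fst ` ?U"
  define h where "h x = (THE r. (x,r) \<in> ?U)" for x
  have hU: "\<And>x r. (x,r) \<in> ?U \<Longrightarrow> h x = r" unfolding h_def using func by blast
  have Ueq: "?U = (\<lambda>x. (x, h x)) ` T"
  proof
    show "?U \<subseteq> (\<lambda>x. (x, h x)) ` T" unfolding T_def using hU by (force)
    show "(\<lambda>x. (x, h x)) ` T \<subseteq> ?U"
    proof
      fix p assume "p \<in> (\<lambda>x. (x, h x)) ` T"
      then obtain x r where "(x,r) \<in> ?U" "p = (x, h x)" unfolding T_def by force
      then show "p \<in> ?U" using hU by auto
    qed
  qed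
  have loc: "\<And>G. G \<in> C \<Longrightarrow> \<exists>TG. G = (\<lambda>x. (x, h x)) ` TG \<and> subspace TG \<and> S \<subseteq> TG \<and> TG \<subseteq> T"
  proof -
    fix G assume GC: "G \<in> C"
    from CA[OF GC] obtain TG hG where d: "G = (\<lambda>x. (x, hG x)) ` TG" "subspace TG" "S \<subseteq> TG"
      unfolding ext_ok_def by blast
    have agree: "\<And>x. x \<in> TG \<Longrightarrow> h x = hG x" using hU d(1) GC by blast
    have "G = (\<lambda>x. (x, h x)) ` TG" using d(1) agree by auto
    moreover have "TG \<subseteq> T" unfolding T_def using d(1) GC by force
    ultimately show "\<exists>TG. G = (\<lambda>x. (x, h x)) ` TG \<and> subspace TG \<and> S \<subseteq> TG \<and> TG \<subseteq> T" using d by blast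
  qed
  have locprops: "\<And>G TG. G \<in> C \<Longrightarrow> G = (\<lambda>x. (x, h x)) ` TG \<Longrightarrow>
      (\<forall>x\<in>S. h x = g x) \<and> (\<forall>x\<in>TG. \<forall>y\<in>TG. h (x+y) = h x + h y) \<and> (\<forall>x\<in>TG. \<forall>a. h (a *\<^sub>R x) = a * h x)
     \<and> (\<forall>x\<in>TG. h x \<le> K * norm x)"
  proof -
    fix G TG assume GC: "G \<in> C" and Gd: "G = (\<lambda>x. (x, h x)) ` TG"
    from CA[OF GC] obtain T' hG where d: "G = (\<lambda>x. (x, hG x)) ` T'" "subspace T'" "S \<subseteq> T'"
      "(\<forall>x\<in>S. hG x = g x)" "(\<forall>x\<in>T'. \<forall>y\<in>T'. hG (x+y) = hG x + hG y)" "(\<forall>x\<in>T'. \<forall>a. hG (a *\<^sub>R x) = a * hG x)"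
      "(\<forall>x\<in>T'. hG x \<le> K * norm x)"
      unfolding ext_ok_def by blast
    have TT: "T' = TG" using d(1) Gd by (metis fst_graph)
    have agree: "\<And>x. x \<in> T' \<Longrightarrow> h x = hG x" using hU d(1) GC by blast
    have sub: "subspace TG" using d(2) TT by simp
    show "?thesis G TG" using d(3-) agree TT subspace_add[OF sub] subspace_scale[OF sub] by auto
  qed
  have two: "\<And>x y. x \<in> T \<Longrightarrow> y \<in> T \<Longrightarrow> \<exists>G TG. G \<in> C \<and> G = (\<lambda>x. (x, h x)) ` TG \<and> subspace TG \<and> x \<in> TG \<and> y \<in> TG"
  proof -
    fix x y assume "x \<in> T" "y \<in> T"
    then obtain G1 G2 r s where G: "G1 \<in> C" "G2 \<in> C" "(x,r) \<in> G1" "(y,s) \<in> G2" unfolding T_def by force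
    have "\<exists>G\<in>C. (x,r) \<in> G \<and> (y,s) \<in> G" using ch[OF G(1,2)] G by blast
    then obtain G where GC: "G \<in> C" "(x,r) \<in> G" "(y,s) \<in> G" by blast
    from loc[OF GC(1)] obtain TG where "G = (\<lambda>x. (x, h x)) ` TG" "subspace TG" by blast
    with GC show "?thesis x y" by blast
  qed
  obtain G0 where G0: "G0 \<in> C" using ne by blast
  from loc[OF G0] obtain T0 where T0: "G0 = (\<lambda>x. (x, h x)) ` T0" "S \<subseteq> T0" "T0 \<subseteq> T" by blast
  have ST: "S \<subseteq> T" using T0 by blast
  have gS: "\<forall>x\<in>S. h x = g x" using locprops[OF G0 T0(1)] by blast
  have add: "\<forall>x\<in>T. \<forall>y\<in>T. x + y \<in> T \<and> h (x+y) = h x + h y"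
  proof (intro ballI)
    fix x y assume "x \<in> T" "y \<in> T"
    from two[OF this] obtain G TG where d: "G \<in> C" "G = (\<lambda>x. (x, h x)) ` TG" "subspace TG" "x \<in> TG" "y \<in> TG" by blast
    from loc[OF d(1)] obtain TG' where "G = (\<lambda>x. (x, h x)) ` TG'" "TG' \<subseteq> T" by blast
    hence "TG \<subseteq> T" using d(2) by (metis fst_graph)
    then show "x + y \<in> T \<and> h (x+y) = h x + h y" using locprops[OF d(1,2)] d subspace_add[OF d(3)] by blast
  qed
  have scl: "\<forall>x\<in>T. \<forall>a. a *\<^sub>R x \<in> T \<and> h (a *\<^sub>R x) = a * h x \<and> h x \<le> K * norm x"
  proof (intro ballI allI)
    fix x a assume "x \<in> T"
    from two[OF this this] obtain G TG where d: "G \<in> C" "G = (\<lambda>x. (x, h x)) ` TG" "subspace TG" "x \<in> TG" by blast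
    from loc[OF d(1)] obtain TG' where "G = (\<lambda>x. (x, h x)) ` TG'" "TG' \<subseteq> T" by blast
    hence "TG \<subseteq> T" using d(2) by (metis fst_graph)
    then show "a *\<^sub>R x \<in> T \<and> h (a *\<^sub>R x) = a * h x \<and> h x \<le> K * norm x"
      using locprops[OF d(1,2)] d subspace_scale[OF d(3)] by blast
  qed
  have "subspace T" unfolding subspace_def using add scl ST S0 by blast
  then show ?thesis unfolding ext_ok_def using Ueq ST gS add scl by blast
qed

lemma one_step:
  fixes T :: "'p::real_normed_vector set"
  assumes sub: "subspace T" and ST: "S \<subseteq> T" and gS: "\<forall>x\<in>S. h x = g x"
    and hadd: "\<forall>x\<in>T. \<forall>y\<in>T. h (x+y) = h x + h y" and hscl: "\<forall>x\<in>T. \<forall>a. h (a *\<^sub>R x) = a * h x"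
    and hK: "\<forall>x\<in>T. h x \<le> K * norm x" and K0: "K \<ge> 0" and x0: "x0 \<notin> T"
  shows "\<exists>G. ext_ok S g K G \<and> (\<lambda>x. (x, h x)) ` T \<subseteq> G \<and> x0 \<in> fst ` G"
proof -
  have T0: "0 \<in> T" using sub by (simp add: subspace_0)
  have key: "h u - K * norm (u - x0) \<le> K * norm (v + x0) - h v" if "u \<in> T" "v \<in> T" for u v
  proof -
    have "h u + h v = h (u + v)" using hadd that by simp
    also have "\<dots> \<le> K * norm (u + v)" using hK that subspace_add[OF sub] by blast
    also have "\<dots> \<le> K * (norm (u - x0) + norm (v + x0))"
      using norm_triangle_ineq[of "u - x0" "v + x0"] K0 by (simp add: mult_left_mono)
    finally show ?thesis by (simp add: algebra_simps)
  qed
  define X where "X = {h u - K * norm (u - x0) | u. u \<in> T}"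
  define xi where "xi = Sup X"
  have Xne: "X \<noteq> {}" using T0 unfolding X_def by blast
  have Xbdd: "bdd_above X" unfolding X_def bdd_above_def using key T0 by blast
  have xi_lo: "h u - K * norm (u - x0) \<le> xi" if "u \<in> T" for u
    unfolding xi_def by (rule cSup_upper[OF _ Xbdd]) (use that X_def in blast)
  have xi_up: "xi \<le> K * norm (v + x0) - h v" if "v \<in> T" for v
    unfolding xi_def by (rule cSup_least[OF Xne]) (use that key X_def in blast)
  have uniq: "a1 = a2 \<and> t1 = t2" if "t1 \<in> T" "t2 \<in> T" "t1 + a1 *\<^sub>R x0 = t2 + a2 *\<^sub>R x0" for t1 t2 a1 a2
  proof (cases "a1 = a2")
    case True then show ?thesis using that by simp
  next
    case False
    have "(a2 - a1) *\<^sub>R x0 = t1 - t2" using that(3) by (simp add: algebra_simps)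
    have "x0 = (1 / (a2 - a1)) *\<^sub>R ((a2 - a1) *\<^sub>R x0)" using False by simp
    hence "x0 = (1 / (a2 - a1)) *\<^sub>R (t1 - t2)" using \<open>(a2 - a1) *\<^sub>R x0 = t1 - t2\<close> by simp
    moreover have "(1 / (a2 - a1)) *\<^sub>R (t1 - t2) \<in> T" using that sub by (simp add: subspace_scale subspace_diff)
    ultimately show ?thesis using x0 by simp
  qed
  define T' where "T' = {t + a *\<^sub>R x0 | t a. t \<in> T}"
  define h' where "h' z = (let p = (SOME p. fst p \<in> T \<and> z = fst p + snd p *\<^sub>R x0) in h (fst p) + snd p * xi)" for z
  have h'eq: "h' (t + a *\<^sub>R x0) = h t + a * xi" if "t \<in> T" for t a
  proof -
    let ?P = "\<lambda>p. fst p \<in> T \<and> t + a *\<^sub>R x0 = fst p + snd p *\<^sub>R x0"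
    have "?P (t, a)" using that by simp
    hence P: "?P (SOME p. ?P p)" by (rule someI)
    hence "snd (SOME p. ?P p) = a \<and> fst (SOME p. ?P p) = t" using uniq[OF that conjunct1[OF P] conjunct2[OF P]] by simp
    then show ?thesis unfolding h'_def Let_def by simp
  qed
  have subT': "subspace T'" unfolding subspace_def T'_def
  proof (intro conjI ballI allI)
    show "0 \<in> {t + a *\<^sub>R x0 |t a. t \<in> T}" using T0 by (intro CollectI exI[of _ 0]) auto
  next
    fix x y assume "x \<in> {t + a *\<^sub>R x0 |t a. t \<in> T}" "y \<in> {t + a *\<^sub>R x0 |t a. t \<in> T}"
    then obtain t1 a1 t2 a2 where "x = t1 + a1 *\<^sub>R x0" "y = t2 + a2 *\<^sub>R x0" "t1 \<in> T" "t2 \<in> T" by blast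
    then show "x + y \<in> {t + a *\<^sub>R x0 |t a. t \<in> T}"
      by (intro CollectI exI[of _ "t1 + t2"] exI[of _ "a1 + a2"]) (auto simp: subspace_add[OF sub] algebra_simps)
  next
    fix c x assume "x \<in> {t + a *\<^sub>R x0 |t a. t \<in> T}"
    then obtain t1 a1 where "x = t1 + a1 *\<^sub>R x0" "t1 \<in> T" by blast
    then show "c *\<^sub>R x \<in> {t + a *\<^sub>R x0 |t a. t \<in> T}"
      by (intro CollectI exI[of _ "c *\<^sub>R t1"] exI[of _ "c * a1"]) (auto simp: subspace_scale[OF sub] algebra_simps)
  qed
  have TT': "T \<subseteq> T'" unfolding T'_def by (force intro: exI[of _ 0])
  have h'h: "h' x = h x" if "x \<in> T" for x using h'eq[OF that, of 0] by simp
  have add': "h' (x + y) = h' x + h' y" if xy: "x \<in> T'" "y \<in> T'" for x y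
  proof -
    obtain t1 a1 t2 a2 where d: "x = t1 + a1 *\<^sub>R x0" "y = t2 + a2 *\<^sub>R x0" "t1 \<in> T" "t2 \<in> T"
      using xy unfolding T'_def by blast
    have e: "x + y = (t1 + t2) + (a1 + a2) *\<^sub>R x0" using d by (simp add: algebra_simps)
    have "h' (x + y) = h (t1 + t2) + (a1 + a2) * xi" unfolding e by (rule h'eq[OF subspace_add[OF sub d(3) d(4)]])
    moreover have "h' x = h t1 + a1 * xi" "h' y = h t2 + a2 * xi" using d h'eq by auto
    moreover have "h (t1 + t2) = h t1 + h t2" using hadd d by simp
    ultimately show ?thesis by (simp add: algebra_simps)
  qed
  have scl': "h' (c *\<^sub>R x) = c * h' x" if xT: "x \<in> T'" for x c
  proof -
    obtain t1 a1 where d: "x = t1 + a1 *\<^sub>R x0" "t1 \<in> T" using xT unfolding T'_def by blast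
    have e: "c *\<^sub>R x = (c *\<^sub>R t1) + (c * a1) *\<^sub>R x0" using d by (simp add: algebra_simps)
    have "h' (c *\<^sub>R x) = h (c *\<^sub>R t1) + (c * a1) * xi" unfolding e by (rule h'eq[OF subspace_scale[OF sub d(2)]])
    moreover have "h' x = h t1 + a1 * xi" using d h'eq by auto
    moreover have "h (c *\<^sub>R t1) = c * h t1" using hscl d by simp
    ultimately show ?thesis by (simp add: algebra_simps)
  qed
  have dom': "h' x \<le> K * norm x" if xT: "x \<in> T'" for x
  proof -
    obtain t a where d: "x = t + a *\<^sub>R x0" "t \<in> T" using xT unfolding T'_def by blast
    have "h t + a * xi \<le> K * norm (t + a *\<^sub>R x0)"
    proof (cases a "0::real" rule: linorder_cases)
      case equal then show ?thesis using hK d by simp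
    next
      case greater
      let ?v = "(1/a) *\<^sub>R t"
      have v: "?v \<in> T" using d sub by (simp add: subspace_scale)
      have "a * xi \<le> a * (K * norm (?v + x0) - h ?v)" using xi_up[OF v] greater by (simp add: mult_left_mono)
      also have "a * (K * norm (?v + x0) - h ?v) = K * (a * norm (?v + x0)) - h t"
        using hscl d greater by (simp add: algebra_simps)
      also have "a * norm (?v + x0) = norm (a *\<^sub>R (?v + x0))" using greater by simp
      also have "a *\<^sub>R (?v + x0) = t + a *\<^sub>R x0" using greater by (simp add: algebra_simps)
      finally show ?thesis by simp
    next
      case less
      define b where "b = - a"
      have b: "b > 0" using less b_def by simp
      let ?u = "(1/b) *\<^sub>R t"
      have u: "?u \<in> T" using d sub by (simp add: subspace_scale)
      have "b * (h ?u - K * norm (?u - x0)) \<le> b * xi" using xi_lo[OF u] b by (simp add: mult_left_mono)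
      moreover have "b * (h ?u - K * norm (?u - x0)) = h t - K * (b * norm (?u - x0))"
        using hscl d b by (simp add: algebra_simps)
      moreover have "b * norm (?u - x0) = norm (b *\<^sub>R (?u - x0))" using b by simp
      moreover have "b *\<^sub>R (?u - x0) = t + a *\<^sub>R x0" using b b_def by (simp add: algebra_simps)
      ultimately have "h t - K * norm (t + a *\<^sub>R x0) \<le> b * xi" by metis
      moreover have "b * xi = - (a * xi)" using b_def by simp
      ultimately show ?thesis by linarith
    qed
    then show ?thesis using d h'eq by simp
  qed
  let ?G = "(\<lambda>x. (x, h' x)) ` T'"
  have "ext_ok S g K ?G" unfolding ext_ok_def
    using subT' TT' ST gS h'h add' scl' dom' by (intro exI[of _ T'] exI[of _ h']) auto
  moreover have "(\<lambda>x. (x, h x)) ` T \<subseteq> ?G" using TT' h'h by force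
  moreover have "x0 \<in> T'" unfolding T'_def by (force intro: exI[of _ 0] exI[of _ 1] T0)
  ultimately show ?thesis by (intro exI[of _ ?G]) (auto simp: image_image)
qed

lemma hahn_banach:
  fixes S :: "'p::real_normed_vector set"
  assumes sub: "subspace S" and gadd: "\<forall>x\<in>S. \<forall>y\<in>S. g (x+y) = g x + g y"
    and gscl: "\<forall>x\<in>S. \<forall>a. g (a *\<^sub>R x) = a * g x" and gK: "\<forall>x\<in>S. g x \<le> K * norm x" and K0: "K \<ge> 0"
  shows "\<exists>h. bounded_linear h \<and> (\<forall>x\<in>S. h x = g x) \<and> (\<forall>x. h x \<le> K * norm x)"
proof -
  let ?A = "Collect (ext_ok S g K)"
  have S0: "0 \<in> S" using sub by (simp add: subspace_0)
  have G0: "ext_ok S g K ((\<lambda>x. (x, g x)) ` S)" unfolding ext_ok_def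
    using sub gadd gscl gK by (intro exI[of _ S] exI[of _ g]) auto
  have "\<forall>C\<in>chains ?A. \<exists>U\<in>?A. \<forall>X\<in>C. X \<subseteq> U"
  proof
    fix C assume C: "C \<in> chains ?A"
    show "\<exists>U\<in>?A. \<forall>X\<in>C. X \<subseteq> U"
    proof (cases "C = {}")
      case True then show ?thesis using G0 by blast
    next
      case False then show ?thesis using chain_ok[OF C False S0] by blast
    qed
  qed
  from Zorn_Lemma2[OF this] obtain M where M: "ext_ok S g K M" and max: "\<forall>X\<in>?A. M \<subseteq> X \<longrightarrow> X = M" by auto
  from M obtain T h where d: "M = (\<lambda>x. (x, h x)) ` T" "subspace T" "S \<subseteq> T" "\<forall>x\<in>S. h x = g x"
     "\<forall>x\<in>T. \<forall>y\<in>T. h (x+y) = h x + h y" "\<forall>x\<in>T. \<forall>a. h (a *\<^sub>R x) = a * h x"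
     "\<forall>x\<in>T. h x \<le> K * norm x" unfolding ext_ok_def by blast
  have TU: "T = UNIV"
  proof (rule ccontr)
    assume "T \<noteq> UNIV"
    then obtain x0 where x0: "x0 \<notin> T" by blast
    from one_step[OF d(2-7) K0 x0] obtain G where G: "ext_ok S g K G" "M \<subseteq> G" "x0 \<in> fst ` G"
      using d(1) by blast
    have "G = M" using max G by blast
    then show False using G(3) x0 d(1) fst_graph by metis
  qed
  have hadd: "\<And>x y. h (x + y) = h x + h y" and hscl: "\<And>r x. h (r *\<^sub>R x) = r *\<^sub>R h x"
    and hK: "\<And>x. h x \<le> K * norm x" using d TU by auto
  have "norm (h x) \<le> norm x * K" for x
  proof -
    have "- h x = h ((-1) *\<^sub>R x)" using hscl[of "-1" x] by simp
    also have "\<dots> \<le> K * norm x" using hK[of "(-1) *\<^sub>R x"] by simp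
    finally show ?thesis using hK[of x] by (simp add: abs_le_iff mult.commute)
  qed
  then have "bounded_linear h" using hadd hscl by (intro bounded_linear_intro) auto
  then show ?thesis using d(4) hK by blast
qed



lemma Lstar_add: "Lstar \<nu> (d + e) = Lstar \<nu> d + Lstar \<nu> e"
  by (simp add: Lstar_def scaleR_add_left sum.distrib)

lemma Lstar_scale: "Lstar \<nu> (a *\<^sub>R d) = a *\<^sub>R Lstar \<nu> d"
  by (simp add: Lstar_def scaleR_sum_right)

lemma Lstar_axis: "Lstar \<nu> (axis j 1) = \<nu> j"
proof -
  have "\<And>i. (axis j (1::real)) $ i *\<^sub>R \<nu> i = (if i = j then \<nu> i else 0)" by (simp add: axis_def)
  then show ?thesis by (simp add: Lstar_def)
qed

lemma Lstar_inj: assumes "lin_indep_family \<nu>" shows "inj (Lstar \<nu>)"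
proof (rule injI)
  fix d e assume "Lstar \<nu> d = Lstar \<nu> e"
  hence eq: "(\<Sum>j\<in>UNIV. (d $ j - e $ j) *\<^sub>R \<nu> j) = 0"
    by (simp add: Lstar_def scaleR_diff_left sum_subtractf)
  have li: "\<forall>c::'a \<Rightarrow> real. (\<Sum>j\<in>UNIV. c j *\<^sub>R \<nu> j) = 0 \<longrightarrow> (\<forall>j. c j = 0)"
    using assms unfolding lin_indep_family_def by blast
  have "\<forall>j. d $ j - e $ j = 0" using mp[OF spec[OF li, of "\<lambda>j. d $ j - e $ j"]] eq by simp
  then show "d = e" by (simp add: vec_eq_iff)
qed

lemma blin_Lstar: "blinfun_apply f (Lstar \<nu> d) = (\<Sum>j\<in>UNIV. d $ j * blinfun_apply f (\<nu> j))"
  by (simp add: Lstar_def blinfun.sum_right blinfun.scaleR_right)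

lemma inner_sum: "(d::real^'m) \<bullet> y = (\<Sum>j\<in>UNIV. d $ j * y $ j)"
  by (simp add: inner_vec_def)

theorem mainTheorem10:
  fixes \<nu> :: "'m::finite \<Rightarrow> 'p::real_normed_vector"
    and y c :: "real^'m"
  assumes "lin_indep_family \<nu>"
    and "y \<noteq> 0"
    and "c \<noteq> 0"
  shows "dual_solution \<nu> y c \<longleftrightarrow>
    ((\<lambda>f. (1 / norm (Lstar \<nu> c)) *\<^sub>R f) ` subdiff norm (Lstar \<nu> c)) \<inter> Mset \<nu> y \<noteq> {}"
proof -
  define x where "x = Lstar \<nu> c"
  define n where "n = norm x"
  have inj: "inj (Lstar \<nu>)" using Lstar_inj[OF assms(1)] .
  have "Lstar \<nu> 0 = 0" using Lstar_scale[of \<nu> 0 0] by simp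
  hence "x \<noteq> 0" using inj assms(3) unfolding x_def by (metis injD)
  hence npos: "n > 0" unfolding n_def by simp
  let ?F = "{norm (Lstar \<nu> d) | d. d \<bullet> y = 1}"
  have bdd: "bdd_below ?F" unfolding bdd_below_def by (intro exI[of _ 0]) auto
  show ?thesis unfolding x_def[symmetric] n_def[symmetric]
  proof
    assume ds: "dual_solution \<nu> y c"
    hence cy: "c \<bullet> y = 1" and ninf: "n = Inf ?F" unfolding dual_solution_def x_def n_def by auto
    have bound: "n * (d \<bullet> y) \<le> norm (Lstar \<nu> d)" for d
    proof (cases "d \<bullet> y > 0")
      case False
      hence "n * (d \<bullet> y) \<le> 0" using npos by (simp add: mult_nonneg_nonpos)
      then show ?thesis by (meson norm_ge_zero order_trans)
    next
      case True
      define s where "s = d \<bullet> y"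
      have "((1/s) *\<^sub>R d) \<bullet> y = 1" using True s_def by simp
      hence "n \<le> norm (Lstar \<nu> ((1/s) *\<^sub>R d))" unfolding ninf by (intro cInf_lower[OF _ bdd]) blast
      also have "\<dots> = norm (Lstar \<nu> d) / s" using True s_def by (simp add: Lstar_scale)
      finally show ?thesis using True s_def by (simp add: field_simps)
    qed
    define S where "S = range (Lstar \<nu>)"
    define g where "g z = n * (inv (Lstar \<nu>) z \<bullet> y)" for z
    have gL: "g (Lstar \<nu> d) = n * (d \<bullet> y)" for d unfolding g_def using inv_f_f[OF inj] by simp
    have subS: "subspace S" unfolding subspace_def S_def
    proof (intro conjI ballI allI)
      show "0 \<in> range (Lstar \<nu>)" using \<open>Lstar \<nu> 0 = 0\<close> by (metis rangeI)
    next
      fix a b assume "a \<in> range (Lstar \<nu>)" "b \<in> range (Lstar \<nu>)"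
      then obtain d e where "a = Lstar \<nu> d" "b = Lstar \<nu> e" by blast
      then show "a + b \<in> range (Lstar \<nu>)" by (metis Lstar_add rangeI)
    next
      fix r a assume "a \<in> range (Lstar \<nu>)"
      then obtain d where "a = Lstar \<nu> d" by blast
      then show "r *\<^sub>R a \<in> range (Lstar \<nu>)" by (metis Lstar_scale rangeI)
    qed
    have gadd: "\<forall>a\<in>S. \<forall>b\<in>S. g (a + b) = g a + g b"
      unfolding S_def by (auto simp: gL Lstar_add[symmetric] inner_add_left algebra_simps)
    have gscl: "\<forall>a\<in>S. \<forall>r. g (r *\<^sub>R a) = r * g a"
      unfolding S_def by (auto simp: gL Lstar_scale[symmetric])
    have gK: "\<forall>a\<in>S. g a \<le> 1 * norm a" unfolding S_def using bound by (auto simp: gL)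
    obtain h where h: "bounded_linear h" "\<forall>a\<in>S. h a = g a" "\<forall>a. h a \<le> 1 * norm a"
      using hahn_banach[OF subS gadd gscl gK] by auto
    define \<mu> where "\<mu> = Blinfun h"
    have mu: "blinfun_apply \<mu> = h" unfolding \<mu>_def using bounded_linear_Blinfun_apply[OF h(1)] .
    have hx: "h x = n" using h(2) gL[of c] cy unfolding S_def x_def by auto
    have "\<mu> \<in> subdiff norm x" unfolding subdiff_def
    proof (intro CollectI allI)
      fix z
      have "h (z - x) = h z - h x" using h(1) by (simp add: linear_diff bounded_linear.linear)
      then show "norm z - norm x \<ge> blinfun_apply \<mu> (z - x)" using h(3) hx n_def mu by simp
    qed
    moreover have "(1/n) *\<^sub>R \<mu> \<in> Mset \<nu> y" unfolding Mset_def
    proof (intro CollectI allI)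
      fix j
      have "h (\<nu> j) = h (Lstar \<nu> (axis j 1))" by (simp add: Lstar_axis)
      also have "\<dots> = g (Lstar \<nu> (axis j 1))" using h(2) unfolding S_def by blast
      also have "\<dots> = n * y $ j" by (simp add: gL inner_axis')
      finally have "h (\<nu> j) = n * y $ j" .
      then show "blinfun_apply ((1/n) *\<^sub>R \<mu>) (\<nu> j) = y $ j" using npos by (simp add: mu scaleR_blinfun.rep_eq)
    qed
    ultimately show "(\<lambda>f. (1 / n) *\<^sub>R f) ` subdiff norm x \<inter> Mset \<nu> y \<noteq> {}" by blast
  next
    assume "(\<lambda>f. (1 / n) *\<^sub>R f) ` subdiff norm x \<inter> Mset \<nu> y \<noteq> {}"
    then obtain \<mu> where mu: "\<mu> \<in> subdiff norm x" "(1/n) *\<^sub>R \<mu> \<in> Mset \<nu> y" by blast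
    have sd: "norm z - n \<ge> blinfun_apply \<mu> z - blinfun_apply \<mu> x" for z
      using mu(1) unfolding subdiff_def n_def by (auto simp: blinfun.diff_right)
    have "blinfun_apply \<mu> x \<ge> n" using sd[of 0] by simp
    moreover have "blinfun_apply \<mu> x \<le> n" using sd[of "2 *\<^sub>R x"] n_def by (simp add: blinfun.scaleR_right)
    ultimately have mx: "blinfun_apply \<mu> x = n" by simp
    have mle: "blinfun_apply \<mu> z \<le> norm z" for z using sd[of z] mx by simp
    have fj: "(1/n) * blinfun_apply \<mu> (\<nu> j) = y $ j" for j using mu(2) unfolding Mset_def by (simp add: scaleR_blinfun.rep_eq)
    have fL: "(1/n) * blinfun_apply \<mu> (Lstar \<nu> d) = d \<bullet> y" for d
      using fj by (simp add: blin_Lstar inner_sum sum_distrib_left algebra_simps)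
    have cy: "c \<bullet> y = 1" using fL[of c] mx npos unfolding x_def by simp
    have low: "n \<le> norm (Lstar \<nu> d)" if "d \<bullet> y = 1" for d
    proof -
      have "1 = (1/n) * blinfun_apply \<mu> (Lstar \<nu> d)" using fL that by simp
      also have "\<dots> \<le> (1/n) * norm (Lstar \<nu> d)" using mle[of "Lstar \<nu> d"] npos by (simp add: divide_right_mono)
      finally show ?thesis using npos by (simp add: field_simps)
    qed
    have "Inf ?F = n" by (rule cInf_eq_minimum) (use cy x_def n_def low in auto)
    then show "dual_solution \<nu> y c" unfolding dual_solution_def using cy x_def n_def by simp
  qed
qed

end
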